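(* Let $X$ be a finite poset with a unique maximal node. Suppose $Y$ is a height zero gluing of $X$ along $C\subseteq \min X$ with gluing map $g:X\to Y$. Let $x_0$ be a minimal node of $X$. Then $$\dim\big(g(x_0)^{\uparrow}_Y\big)=\max\{\dim(x^{\uparrow}_X)\mid x\in X,\ g(x)=g(x_0)\}.$$
   Context: All posets are nonempty. For $x,y$ in a poset $X$, $y$ covers $x$ (written $x<_c y$) if $x<y$ and there is no $z\in X$ with $x<z<y$. The length of a finite chain $C$ is $|C|-1$; $\dim(X)$ is the supremum of the lengths of finite chains in $X$; $\min X$ is the set of minimal elements of $X$. For $x\in X$ the up set is $x^{\uparrow}_X=\{y\in X: x\le y\}$ with the induced order. A poset map is an order-preserving map. A subset $C\subseteq X$ is complete if whenever $u,v\in C$ and $u\le y\le v$ with $y\in X$, then $y\in C$ (every subset of $\min X$ is complete). Given a surjective poset map $g:X\to Y$, a poset map $h:X\to Z$ is compatible with $g$ if $h$ is constant on $g^{-1}(y)$ for every $y\in Y$. A poset $Y$ is a gluing of $X$ with gluing map $g$ (a surjective poset map $X\to Y$) if for every poset map $h:X\to Z$ compatible with $g$ there is a unique poset map $\varphi:Y\to Z$ with $\varphi\circ g=h$. It is a gluing of $X$ along a complete subset $C$ if moreover $g$ is constant on $C$, and whenever $g(x)=g(x')$ for distinct $x,x'\in X$, both $x,x'\in C$. A height zero gluing is a gluing along some $C\subseteq\min X$. *)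

theory Defs
  imports Main "HOL-Library.Extended_Nat"
begin

definition poset :: "'a set \<Rightarrow> ('a \<Rightarrow> 'a \<Rightarrow> bool) \<Rightarrow> bool" where
  "poset A le \<longleftrightarrow> A \<noteq> {} \<and>
     (\<forall>x\<in>A. le x x) \<and>
     (\<forall>x\<in>A. \<forall>y\<in>A. le x y \<and> le y x \<longrightarrow> x = y) \<and>
     (\<forall>x\<in>A. \<forall>y\<in>A. \<forall>z\<in>A. le x y \<and> le y z \<longrightarrow> le x z)"

definition poset_map :: "'a set \<Rightarrow> ('a \<Rightarrow> 'a \<Rightarrow> bool) \<Rightarrow> 'b set \<Rightarrow> ('b \<Rightarrow> 'b \<Rightarrow> bool)
    \<Rightarrow> ('a \<Rightarrow> 'b) \<Rightarrow> bool" where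
  "poset_map A le B le' f \<longleftrightarrow> f ` A \<subseteq> B \<and> (\<forall>x\<in>A. \<forall>y\<in>A. le x y \<longrightarrow> le' (f x) (f y))"

definition is_chain :: "'a set \<Rightarrow> ('a \<Rightarrow> 'a \<Rightarrow> bool) \<Rightarrow> 'a set \<Rightarrow> bool" where
  "is_chain A le C \<longleftrightarrow> C \<subseteq> A \<and> (\<forall>x\<in>C. \<forall>y\<in>C. le x y \<or> le y x)"

definition pdim :: "'a set \<Rightarrow> ('a \<Rightarrow> 'a \<Rightarrow> bool) \<Rightarrow> enat" where
  "pdim A le = Sup {enat (card C - 1) | C. is_chain A le C \<and> finite C \<and> C \<noteq> {}}"

definition min_set :: "'a set \<Rightarrow> ('a \<Rightarrow> 'a \<Rightarrow> bool) \<Rightarrow> 'a set" where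
  "min_set A le = {x\<in>A. \<forall>y\<in>A. le y x \<longrightarrow> y = x}"

definition is_maximal :: "'a set \<Rightarrow> ('a \<Rightarrow> 'a \<Rightarrow> bool) \<Rightarrow> 'a \<Rightarrow> bool" where
  "is_maximal A le m \<longleftrightarrow> m \<in> A \<and> (\<forall>y\<in>A. le m y \<longrightarrow> y = m)"

text \<open>Up set of x (carrier; the order is the restriction of le).\<close>
definition up_set :: "'a set \<Rightarrow> ('a \<Rightarrow> 'a \<Rightarrow> bool) \<Rightarrow> 'a \<Rightarrow> 'a set" where
  "up_set A le x = {y\<in>A. le x y}"

definition complete_subset :: "'a set \<Rightarrow> ('a \<Rightarrow> 'a \<Rightarrow> bool) \<Rightarrow> 'a set \<Rightarrow> bool" where
  "complete_subset A le C \<longleftrightarrow> C \<subseteq> A \<and>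
     (\<forall>u\<in>C. \<forall>v\<in>C. \<forall>y\<in>A. le u y \<and> le y v \<longrightarrow> y \<in> C)"

definition compatible :: "'a set \<Rightarrow> ('a \<Rightarrow> 'b) \<Rightarrow> ('a \<Rightarrow> 'c) \<Rightarrow> bool" where
  "compatible A g h \<longleftrightarrow> (\<forall>x\<in>A. \<forall>x'\<in>A. g x = g x' \<longrightarrow> h x = h x')"

text \<open>Gluing: universal property. Test posets Z range over posets whose carrier lives in the
  element type of Y.\<close>
definition gluing :: "'a set \<Rightarrow> ('a \<Rightarrow> 'a \<Rightarrow> bool) \<Rightarrow> 'b set \<Rightarrow> ('b \<Rightarrow> 'b \<Rightarrow> bool)
    \<Rightarrow> ('a \<Rightarrow> 'b) \<Rightarrow> bool" where
  "gluing X le Y leY g \<longleftrightarrow> poset Y leY \<and> poset_map X le Y leY g \<and> g ` X = Y \<and>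
     (\<forall>(Z::'b set) leZ h. poset Z leZ \<and> poset_map X le Z leZ h \<and> compatible X g h \<longrightarrow>
        (\<exists>\<phi>. poset_map Y leY Z leZ \<phi> \<and> (\<forall>x\<in>X. \<phi> (g x) = h x) \<and>
           (\<forall>\<psi>. poset_map Y leY Z leZ \<psi> \<and> (\<forall>x\<in>X. \<psi> (g x) = h x) \<longrightarrow>
              (\<forall>y\<in>Y. \<psi> y = \<phi> y))))"

definition gluing_along :: "'a set \<Rightarrow> ('a \<Rightarrow> 'a \<Rightarrow> bool) \<Rightarrow> 'a set \<Rightarrow> 'b set
    \<Rightarrow> ('b \<Rightarrow> 'b \<Rightarrow> bool) \<Rightarrow> ('a \<Rightarrow> 'b) \<Rightarrow> bool" where
  "gluing_along X le C Y leY g \<longleftrightarrow> gluing X le Y leY g \<and> complete_subset X le C \<and>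
     (\<forall>x\<in>C. \<forall>x'\<in>C. g x = g x') \<and>
     (\<forall>x\<in>X. \<forall>x'\<in>X. x \<noteq> x' \<and> g x = g x' \<longrightarrow> x \<in> C \<and> x' \<in> C)"

end

theory Submission
  imports Defs
begin

lemma poset_refl: "poset X le \<Longrightarrow> x \<in> X \<Longrightarrow> le x x" unfolding poset_def by blast
lemma poset_trans: "poset X le \<Longrightarrow> x \<in> X \<Longrightarrow> y \<in> X \<Longrightarrow> z \<in> X \<Longrightarrow> le x y \<Longrightarrow> le y z \<Longrightarrow> le x z"
  unfolding poset_def by blast

lemma poset_antisym: "poset X le \<Longrightarrow> x \<in> X \<Longrightarrow> y \<in> X \<Longrightarrow> le x y \<Longrightarrow> le y x \<Longrightarrow> x = y"
  unfolding poset_def by blast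
lemma poset_ne: "poset X le \<Longrightarrow> X \<noteq> {}"
  unfolding poset_def by blast

lemma gluingD: "gluing X le Y leY g \<Longrightarrow> poset Y leY \<and> poset_map X le Y leY g \<and> g ` X = Y"
  unfolding gluing_def by (elim conjE) (intro conjI)
lemma gluing_univ: "gluing X le (Y::'b set) leY g \<Longrightarrow> poset (Z::'b set) leZ \<Longrightarrow> poset_map X le Z leZ h \<Longrightarrow> compatible X g h
   \<Longrightarrow> \<exists>\<phi>. poset_map Y leY Z leZ \<phi> \<and> (\<forall>x\<in>X. \<phi> (g x) = h x)"
  unfolding gluing_def by blast
lemma gluing_alongD: "gluing_along X le C Y leY g \<Longrightarrow> gluing X le Y leY g \<and> (\<forall>x\<in>X. \<forall>x'\<in>X. x \<noteq> x' \<and> g x = g x' \<longrightarrow> x \<in> C \<and> x' \<in> C)"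
  unfolding gluing_along_def by (elim conjE) (intro conjI)

lemma minD: "x \<in> min_set X le \<Longrightarrow> y \<in> X \<Longrightarrow> le y x \<Longrightarrow> y = x"
  unfolding min_set_def by auto

lemma R_char:
  assumes P: "poset X le" and G: "gluing_along X le C Y leY g" and CM: "C \<subseteq> min_set X le"
    and a: "a \<in> X" and b: "b \<in> X" and l: "leY (g a) (g b)"
  shows "\<exists>a'\<in>X. \<exists>b'\<in>X. g a' = g a \<and> g b' = g b \<and> le a' b'"
proof -
  define R where "R = (\<lambda>y y'. \<exists>a\<in>X. \<exists>b\<in>X. g a = y \<and> g b = y' \<and> le a b)"
  have gl: "gluing X le Y leY g" and inj: "\<forall>x\<in>X. \<forall>x'\<in>X. x \<noteq> x' \<and> g x = g x' \<longrightarrow> x \<in> C \<and> x' \<in> C"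
    using gluing_alongD[OF G] by auto
  have PY: "poset Y leY" and sur: "g ` X = Y" using gluingD[OF gl] by auto
  have refl: "\<forall>x\<in>X. le x x" and antis: "\<forall>x\<in>X. \<forall>y\<in>X. le x y \<and> le y x \<longrightarrow> x = y"
    and trans: "\<forall>x\<in>X. \<forall>y\<in>X. \<forall>z\<in>X. le x y \<and> le y z \<longrightarrow> le x z"
    using poset_refl[OF P] poset_antisym[OF P] poset_trans[OF P] by blast+
  have mn: "\<And>u v. u \<in> X \<Longrightarrow> v \<in> X \<Longrightarrow> u \<noteq> v \<Longrightarrow> g u = g v \<Longrightarrow> w \<in> X \<Longrightarrow> le w u \<Longrightarrow> w = u" for w
  proof -
    fix u v assume "u \<in> X" "v \<in> X" "u \<noteq> v" "g u = g v" "w \<in> X" "le w u"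
    then have "u \<in> C" using inj by blast
    then have "u \<in> min_set X le" using CM by blast
    then show "w = u" using minD \<open>w \<in> X\<close> \<open>le w u\<close> by metis
  qed
  have "poset Y R"
    unfolding poset_def
  proof (intro conjI ballI impI)
    show "Y \<noteq> {}" using poset_ne[OF PY] .
  next
    fix y assume "y \<in> Y" then obtain x where "x \<in> X" "y = g x" using sur by auto
    then show "R y y" unfolding R_def using refl by blast
  next
    fix y y' assume "y \<in> Y" "y' \<in> Y" and h: "R y y' \<and> R y' y"
    then obtain a1 b1 a2 b2 where w: "a1 \<in> X" "b1 \<in> X" "a2 \<in> X" "b2 \<in> X" "g a1 = y" "g b1 = y'"
      "le a1 b1" "g a2 = y'" "g b2 = y" "le a2 b2" unfolding R_def by blast
    show "y = y'"
    proof (cases "b1 = a2")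
      case False
      then have "a1 = b1" using mn[of b1 a2 a1] w by auto
      then show ?thesis using w by simp
    next
      case T1: True
      show ?thesis
      proof (cases "b2 = a1")
        case False
        then have "a2 = b2" using mn[of b2 a1 a2] w by auto
        then show ?thesis using w by simp
      next
        case True
        then show ?thesis using T1 w antis by metis
      qed
    qed
  next
    fix y1 y2 y3 assume "y1 \<in> Y" "y2 \<in> Y" "y3 \<in> Y" and h: "R y1 y2 \<and> R y2 y3"
    then obtain a1 b1 a2 b2 where w: "a1 \<in> X" "b1 \<in> X" "a2 \<in> X" "b2 \<in> X" "g a1 = y1" "g b1 = y2"
      "le a1 b1" "g a2 = y2" "g b2 = y3" "le a2 b2" unfolding R_def by blast
    show "R y1 y3"
    proof (cases "b1 = a2")
      case True
      then show ?thesis unfolding R_def using w trans by metis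
    next
      case False
      then have "a1 = b1" using mn[of b1 a2 a1] w by auto
      then show ?thesis unfolding R_def using w by metis
    qed
  qed
  moreover have "poset_map X le Y R g" unfolding poset_map_def R_def using sur by blast
  moreover have "compatible X g g" unfolding compatible_def by auto
  ultimately obtain \<phi> where phi: "poset_map Y leY Y R \<phi>" "\<forall>x\<in>X. \<phi> (g x) = g x"
    using gluing_univ[OF gl] by blast
  have "R (\<phi> (g a)) (\<phi> (g b))" using phi(1) a b l sur unfolding poset_map_def by blast
  then have "R (g a) (g b)" using phi(2) a b by simp
  then show ?thesis unfolding R_def by blast
qed

lemma chain_min:
  assumes P: "poset X le" and "finite S" "S \<noteq> {}" "S \<subseteq> X" "\<forall>x\<in>S. \<forall>y\<in>S. le x y \<or> le y x"
  shows "\<exists>m\<in>S. \<forall>s\<in>S. le m s"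
  using assms(2-5)
proof (induction S rule: finite_ne_induct)
  case (singleton x)
  then have "le x x" using poset_refl[OF P] by simp
  then show ?case by simp
next
  case (insert x F)
  have F1: "F \<subseteq> X" "\<forall>x\<in>F. \<forall>y\<in>F. le x y \<or> le y x" using insert.prems by auto
  obtain m where m: "m \<in> F" "\<forall>s\<in>F. le m s" using insert.IH[OF F1] by blast
  have xX: "x \<in> X" using insert.prems by simp
  show ?case
  proof (cases "le x m")
    case True
    have "\<forall>s\<in>insert x F. le x s"
    proof
      fix s assume s: "s \<in> insert x F"
      show "le x s"
      proof (cases "s = x")
        case True
        then show ?thesis using poset_refl[OF P xX] by simp
      next
        case False
        then have sF: "s \<in> F" using s by simp
        then have "le m s" "s \<in> X" "m \<in> X" using m F1 by auto
        then show ?thesis using poset_trans[OF P xX _ _ \<open>le x m\<close>] by blast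
      qed
    qed
    then show ?thesis by blast
  next
    case False
    then have "le m x" using insert.prems m by blast
    then show ?thesis using m by auto
  qed
qed

theorem mainTheorem1:
  fixes X :: "'a set" and le :: "'a \<Rightarrow> 'a \<Rightarrow> bool"
    and Y :: "'b set" and leY :: "'b \<Rightarrow> 'b \<Rightarrow> bool"
    and g :: "'a \<Rightarrow> 'b" and C :: "'a set" and x0 :: 'a
  assumes "poset X le" and "finite X"
    and "\<exists>!m. is_maximal X le m"
    and "C \<subseteq> min_set X le"
    and "gluing_along X le C Y leY g"
    and "x0 \<in> min_set X le"
  shows "pdim (up_set Y leY (g x0)) leY
           = Max {pdim (up_set X le x) le | x. x \<in> X \<and> g x = g x0}"
proof -
  note P = assms(1) and CM = assms(4) and G = assms(5)
  have gl: "gluing X le Y leY g" and inj: "\<forall>x\<in>X. \<forall>x'\<in>X. x \<noteq> x' \<and> g x = g x' \<longrightarrow> x \<in> C \<and> x' \<in> C"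
    using gluing_alongD[OF G] by auto
  have PY: "poset Y leY" and sur: "g ` X = Y" and pm: "poset_map X le Y leY g"
    using gluingD[OF gl] by auto
  have refl: "\<forall>x\<in>X. le x x" and antis: "\<forall>x\<in>X. \<forall>y\<in>X. le x y \<and> le y x \<longrightarrow> x = y"
    and trans: "\<forall>x\<in>X. \<forall>y\<in>X. \<forall>z\<in>X. le x y \<and> le y z \<longrightarrow> le x z"
    using poset_refl[OF P] poset_antisym[OF P] poset_trans[OF P] by blast+
  have mn: "\<And>u v w. u \<in> X \<Longrightarrow> v \<in> X \<Longrightarrow> u \<noteq> v \<Longrightarrow> g u = g v \<Longrightarrow> w \<in> X \<Longrightarrow> le w u \<Longrightarrow> w = u"
  proof -
    fix u v w assume "u \<in> X" "v \<in> X" "u \<noteq> v" "g u = g v" "w \<in> X" "le w u"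
    then have "u \<in> C" using inj by blast
    then have "u \<in> min_set X le" using CM by blast
    then show "w = u" using minD \<open>w \<in> X\<close> \<open>le w u\<close> by metis
  qed
  have x0X: "x0 \<in> X" using assms(6) unfolding min_set_def by auto
  define K where "K = {x\<in>X. g x = g x0}"
  define A where "A = (\<lambda>x. pdim (up_set X le x) le) ` K"
  have Aeq: "{pdim (up_set X le x) le | x. x \<in> X \<and> g x = g x0} = A"
    unfolding A_def K_def by auto
  have finA: "finite A" "A \<noteq> {}" unfolding A_def K_def using assms(2) x0X by auto
  have MS: "Max A = Sup A" using cSup_eq_Max[OF finA] by simp
  have step1: "\<exists>D. is_chain (up_set Y leY (g x0)) leY D \<and> finite D \<and> D \<noteq> {} \<and> card D = card E"
    if xK: "x \<in> K" and E: "is_chain (up_set X le x) le E" "finite E" "E \<noteq> {}" for x E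
  proof (intro exI conjI)
    have EX: "E \<subseteq> X" and Ex: "\<forall>e\<in>E. le x e" using E unfolding is_chain_def up_set_def by auto
    have xX: "x \<in> X" and gx: "g x = g x0" using xK unfolding K_def by auto
    show "is_chain (up_set Y leY (g x0)) leY (g ` E)"
      unfolding is_chain_def up_set_def
    proof (intro conjI ballI subsetI)
      fix y assume "y \<in> g ` E"
      then obtain e where "e \<in> E" "y = g e" by auto
      then have eX: "e \<in> X" "le x e" using EX Ex by auto
      then have "leY (g x) (g e)" "g e \<in> Y" using pm xX unfolding poset_map_def by auto
      then show "y \<in> {y \<in> Y. leY (g x0) y}"
        using gx \<open>y = g e\<close> by simp
    next
      fix y y' assume "y \<in> g ` E" "y' \<in> g ` E"
      then obtain e e' where "e \<in> E" "y = g e" "e' \<in> E" "y' = g e'" by auto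
      then show "leY y y' \<or> leY y' y"
        using pm EX E(1) unfolding poset_map_def is_chain_def by blast
    qed
    show "finite (g ` E)" "g ` E \<noteq> {}" using E by auto
    have "inj_on g E"
    proof (rule inj_onI)
      fix e e' assume "e \<in> E" "e' \<in> E" "g e = g e'"
      show "e = e'"
      proof (rule ccontr)
        assume "e \<noteq> e'"
        then have "x = e" using mn[of e e' x] \<open>e \<in> E\<close> \<open>e' \<in> E\<close> \<open>g e = g e'\<close> EX Ex xX by auto
        moreover have "x = e'" using mn[of e' e x] \<open>e \<noteq> e'\<close> \<open>e \<in> E\<close> \<open>e' \<in> E\<close> \<open>g e = g e'\<close> EX Ex xX by auto
        ultimately show False using \<open>e \<noteq> e'\<close> by simp
      qed
    qed
    then show "card (g ` E) = card E" by (simp add: card_image)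
  qed
  have step2: "\<exists>x\<in>K. \<exists>E. is_chain (up_set X le x) le E \<and> finite E \<and> E \<noteq> {} \<and> card D \<le> card E"
    if D: "is_chain (up_set Y leY (g x0)) leY D" "finite D" "D \<noteq> {}" for D
  proof -
    have DY: "D \<subseteq> Y" and Dup: "\<forall>y\<in>D. leY (g x0) y" and Dch: "\<forall>y\<in>D. \<forall>y'\<in>D. leY y y' \<or> leY y' y"
      using D unfolding is_chain_def up_set_def by auto
    define D' where "D' = D - {g x0}"
    define p where "p = (\<lambda>y. SOME b. b \<in> X \<and> g b = y)"
    have key: "p y \<in> X \<and> g (p y) = y \<and> (\<forall>b\<in>X. g b = y \<longrightarrow> b = p y) \<and> (\<exists>a\<in>K. le a (p y))"
      if y: "y \<in> D'" for y
    proof -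
      have yY: "y \<in> Y" "leY (g x0) y" "y \<noteq> g x0" using y DY Dup unfolding D'_def by auto
      then obtain b0 where b0: "b0 \<in> X" "g b0 = y" using sur by auto
      have ex: "\<exists>b. b \<in> X \<and> g b = y" using b0 by auto
      have pX: "p y \<in> X" "g (p y) = y" using someI_ex[OF ex] unfolding p_def by auto
      obtain a b where ab: "a \<in> X" "b \<in> X" "g a = g x0" "g b = g (p y)" "le a b"
        using R_char[OF P G CM x0X pX(1)] yY(2) pX(2) by auto
      have uniq: "\<forall>b'\<in>X. g b' = y \<longrightarrow> b' = b"
      proof (intro ballI impI)
        fix b' assume "b' \<in> X" "g b' = y"
        show "b' = b"
        proof (rule ccontr)
          assume "b' \<noteq> b"
          then have "a = b" using mn[of b b' a] ab \<open>b' \<in> X\<close> \<open>g b' = y\<close> pX by auto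
          then show False using ab pX yY by simp
        qed
      qed
      have "b = p y" using uniq pX by auto
      then show ?thesis using pX uniq ab unfolding K_def by auto
    qed
    have pord: "le (p y) (p y')" if py: "y \<in> D'" "y' \<in> D'" "leY y y'" for y y'
    proof -
      have k1: "p y \<in> X" "g (p y) = y" using key[OF py(1)] by auto
      have k2: "p y' \<in> X" "g (p y') = y'" using key[OF py(2)] by auto
      obtain a b where ab: "a \<in> X" "b \<in> X" "g a = g (p y)" "g b = g (p y')" "le a b"
        using R_char[OF P G CM k1(1) k2(1)] k1 k2 py(3) by auto
      have u1: "\<forall>b\<in>X. g b = y \<longrightarrow> b = p y" using key[OF py(1)] by blast
      have u2: "\<forall>b\<in>X. g b = y' \<longrightarrow> b = p y'" using key[OF py(2)] by blast
      have "a = p y" using u1 ab(1,3) k1(2) by simp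
      moreover have "b = p y'" using u2 ab(2,4) k2(2) by simp
      ultimately show ?thesis using ab by simp
    qed
    have finD': "finite D'" using D unfolding D'_def by auto
    have cardD: "card D \<le> card D' + 1"
    proof -
      have "card D \<le> card (insert (g x0) D')" using finD' unfolding D'_def by (intro card_mono) auto
      also have "\<dots> \<le> card D' + 1" by (simp add: card_insert_le_m1 card_insert_if)
      finally show ?thesis .
    qed
    show ?thesis
    proof (cases "D' = {}")
      case True
      then have "card D \<le> 1" using cardD by simp
      moreover have "is_chain (up_set X le x0) le {x0}" unfolding is_chain_def up_set_def using x0X refl by auto
      moreover have "x0 \<in> K" unfolding K_def using x0X by auto
      ultimately show ?thesis by (intro bexI[of _ x0] exI[of _ "{x0}"]) auto
    next
      case False
      define E0 where "E0 = p ` D'"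
      have E0X: "E0 \<subseteq> X"
      proof
        fix e assume "e \<in> E0"
        then obtain y where "y \<in> D'" "e = p y" unfolding E0_def by blast
        then show "e \<in> X" using key[of y] by blast
      qed
      have E0ch: "\<forall>e\<in>E0. \<forall>e'\<in>E0. le e e' \<or> le e' e"
        unfolding E0_def using pord Dch unfolding D'_def by blast
      obtain m where m: "m \<in> E0" "\<forall>s\<in>E0. le m s"
        using chain_min[OF P _ _ E0X E0ch] finD' False unfolding E0_def by auto
      then obtain ym where ym: "ym \<in> D'" "m = p ym" unfolding E0_def by auto
      then obtain a where a: "a \<in> K" "le a m" using key[OF ym(1)] by blast
      have aX: "a \<in> X" and ga: "g a = g x0" using a unfolding K_def by auto
      have mX: "m \<in> X" using m E0X by auto
      have injp: "inj_on p D'"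
      proof (rule inj_onI)
        fix y y' assume "y \<in> D'" "y' \<in> D'" "p y = p y'"
        then show "y = y'" using key[of y] key[of y'] by metis
      qed
      have anot: "a \<notin> E0"
      proof
        assume "a \<in> E0"
        then obtain y where "y \<in> D'" "a = p y" unfolding E0_def by auto
        then show False using key[of y] ga unfolding D'_def by auto
      qed
      have cE: "card (insert a E0) = card D' + 1"
        using anot finD' injp unfolding E0_def by (simp add: card_image)
      have "is_chain (up_set X le a) le (insert a E0)"
        unfolding is_chain_def up_set_def
      proof (intro conjI ballI subsetI)
        fix e assume "e \<in> insert a E0"
        have ale: "le a e" if "e \<in> E0" for e
        proof -
          have "le m e" "e \<in> X" using m that E0X by auto
          then show ?thesis using trans aX mX a(2) by blast
        qed
        then show "e \<in> {y \<in> X. le a y}"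
          using \<open>e \<in> insert a E0\<close> aX E0X refl by auto
      next
        fix e e' assume "e \<in> insert a E0" "e' \<in> insert a E0"
        have ale: "le a e" if "e \<in> E0" for e
        proof -
          have "le m e" "e \<in> X" using m that E0X by auto
          then show ?thesis using trans aX mX a(2) by blast
        qed
        show "le e e' \<or> le e' e"
          using \<open>e \<in> insert a E0\<close> \<open>e' \<in> insert a E0\<close> ale aX refl E0ch by auto
      qed
      moreover have "finite E0" unfolding E0_def using finD' by simp
      ultimately show ?thesis using a cE cardD finD' by (intro bexI[of _ a] exI[of _ "insert a E0"]) auto
    qed
  qed
  have le1: "pdim (up_set Y leY (g x0)) leY \<le> Sup A"
    unfolding pdim_def
  proof (rule Sup_least)
    fix n assume "n \<in> {enat (card D - 1) |D. is_chain (up_set Y leY (g x0)) leY D \<and> finite D \<and> D \<noteq> {}}"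
    then obtain D where D: "n = enat (card D - 1)" "is_chain (up_set Y leY (g x0)) leY D" "finite D" "D \<noteq> {}" by auto
    then obtain x E where xE: "x \<in> K" "is_chain (up_set X le x) le E" "finite E" "E \<noteq> {}" "card D \<le> card E"
      using step2 by blast
    have "n \<le> enat (card E - 1)" using D xE by simp
    also have "\<dots> \<le> pdim (up_set X le x) le" unfolding pdim_def
      by (rule Sup_upper) (use xE in auto)
    also have "\<dots> \<le> Sup A" unfolding A_def by (rule Sup_upper) (use xE in auto)
    finally show "n \<le> Sup A" .
  qed
  have le2: "Sup A \<le> pdim (up_set Y leY (g x0)) leY"
  proof (rule Sup_least)
    fix a assume "a \<in> A"
    then obtain x where x: "x \<in> K" "a = pdim (up_set X le x) le" unfolding A_def by auto
    show "a \<le> pdim (up_set Y leY (g x0)) leY" unfolding x(2) pdim_def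
    proof (rule Sup_least)
      fix n assume "n \<in> {enat (card E - 1) |E. is_chain (up_set X le x) le E \<and> finite E \<and> E \<noteq> {}}"
      then obtain E where E: "n = enat (card E - 1)" "is_chain (up_set X le x) le E" "finite E" "E \<noteq> {}" by auto
      then obtain D where D: "is_chain (up_set Y leY (g x0)) leY D" "finite D" "D \<noteq> {}" "card D = card E"
        using step1[OF x(1)] by blast
      have "n = enat (card D - 1)" using E(1) D(4) by simp
      then have "n \<in> {enat (card D - 1) |D. is_chain (up_set Y leY (g x0)) leY D \<and> finite D \<and> D \<noteq> {}}"
        using D by blast
      then show "n \<le> Sup {enat (card D - 1) |D. is_chain (up_set Y leY (g x0)) leY D \<and> finite D \<and> D \<noteq> {}}"
        by (rule Sup_upper)
    qed
  qed
  show ?thesis unfolding Aeq MS using le1 le2 by (rule antisym)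
qed

end
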